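(* For every $n\ge1$ let $A_n$ and $B_n$ denote the numbers of tilings of the regions $A_n$ and $B_n$ (defined in the context). Then $A_1=1$, $A_2=4$, $B_1=2$, $B_2=3$, and for all $n\ge1$ $$A_n=\frac14\left[(1+\sqrt2)^{n+1}+(1-\sqrt2)^{n+1}\right]+\frac12(-1)^n=\frac12H_{n+1}+\frac12(-1)^n,$$ $$B_n=\frac14\left[(1+\sqrt2)^{n+1}+(1-\sqrt2)^{n+1}\right]-\frac12(-1)^n=\frac12H_{n+1}-\frac12(-1)^n,$$ where $H_m=\frac{(1+\sqrt2)^m+(1-\sqrt2)^m}{2}$. Thus $(A_n)_{n\ge1}=(1,4,8,21,49,120,288,\dots)$ and $(B_n)_{n\ge1}=(2,3,9,20,50,119,289,\dots)$.
   Context: Let $s=\sqrt3/2$. Consider the standard triangular lattice in the plane whose vertices are the points $(a+b/2,\,bs)$ with $a,b\in\mathbb Z$ and whose edges are the unit segments joining lattice points in the directions $0^\circ,60^\circ,120^\circ$; it divides the plane into unit equilateral triangles called cells. A small tile is a single cell; a large tile is an equilateral triangle of side $2$ whose vertices are lattice points (so it is a union of $4$ cells; it may point up or down). For a region $R$ that is a finite union of cells, a tiling of $R$ is a finite set of small and large tiles, each contained in $R$, with pairwise disjoint interiors and union equal to $R$. For $n\ge1$, $A_n$ is the parallelogram with vertices $(0,0),(n,0),(n+1,2s),(1,2s)$ and $B_n$ is the trapezoid with vertices $(0,0),(n+1,0),(n,2s),(1,2s)$ (for $n=1$ it is a triangle of side $2$); each consists of $4n$ cells. By abuse of notation, $A_n$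 and $B_n$ also denote the number of tilings of these regions. *)

theory Defs
  imports Complex_Main
begin

text \<open>Lattice point (a,b) in Z^2 stands for the plane point (a + b/2, b*sqrt3/2).
  A cell is encoded as (a, b, up): the up-cell has vertices (a,b),(a+1,b),(a,b+1);
  the down-cell has vertices (a+1,b),(a,b+1),(a+1,b+1).  Every unit triangle of the
  lattice is exactly one such cell.\<close>

type_synonym cell = "int \<times> int \<times> bool"

definition small_tiles :: "cell set set" where
  "small_tiles = {{c} | c. True}"

text \<open>Large up tile with vertices (a,b),(a+2,b),(a,b+2);
  large down tile with vertices (a+2,b),(a,b+2),(a+2,b+2), as sets of cells.\<close>
definition large_up :: "int \<Rightarrow> int \<Rightarrow> cell set" where
  "large_up a b = {(a,b,True), (a+1,b,True), (a,b+1,True), (a,b,False)}"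

definition large_down :: "int \<Rightarrow> int \<Rightarrow> cell set" where
  "large_down a b = {(a+1,b,False), (a,b+1,False), (a+1,b+1,False), (a+1,b+1,True)}"

definition large_tiles :: "cell set set" where
  "large_tiles = {large_up a b | a b. True} \<union> {large_down a b | a b. True}"

definition tilings :: "cell set \<Rightarrow> cell set set set" where
  "tilings R = {T. finite T \<and> T \<subseteq> small_tiles \<union> large_tiles \<and> (\<forall>t\<in>T. t \<subseteq> R)
      \<and> (\<forall>t\<in>T. \<forall>t'\<in>T. t \<noteq> t' \<longrightarrow> t \<inter> t' = {}) \<and> \<Union>T = R}"

definition num_tilings :: "cell set \<Rightarrow> nat" where
  "num_tilings R = card (tilings R)"

text \<open>A_n: parallelogram (0,0),(n,0),(n+1,2s),(1,2s).\<close>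
definition regionA :: "nat \<Rightarrow> cell set" where
  "regionA n = {(a,b,u). 0 \<le> a \<and> a < int n \<and> 0 \<le> b \<and> b < 2}"

text \<open>B_n: trapezoid (0,0),(n+1,0),(n,2s),(1,2s).\<close>
definition regionB :: "nat \<Rightarrow> cell set" where
  "regionB n = {(a,b,u). 0 \<le> a \<and> 0 \<le> b \<and> b < 2 \<and>
      (if u then a + b \<le> int n else a + b \<le> int n - 1)}"

definition A :: "nat \<Rightarrow> nat" where "A n = num_tilings (regionA n)"
definition B :: "nat \<Rightarrow> nat" where "B n = num_tilings (regionB n)"

definition H :: "nat \<Rightarrow> real" where
  "H m = ((1 + sqrt 2) ^ m + (1 - sqrt 2) ^ m) / 2"

end

theory Submission
  imports Defs
begin


definition Adm :: "cell set \<Rightarrow> cell set set set" where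
  "Adm R = {L. L \<subseteq> large_tiles \<and> (\<forall>t\<in>L. t \<subseteq> R) \<and> (\<forall>t\<in>L. \<forall>t'\<in>L. t \<noteq> t' \<longrightarrow> t \<inter> t' = {})}"

lemma large_not_small: "t \<in> large_tiles \<Longrightarrow> t \<notin> small_tiles"
proof
  assume "t \<in> small_tiles"
  then obtain c where c: "t = {c}" by (auto simp: small_tiles_def)
  assume "t \<in> large_tiles"
  then obtain a b where "t = large_up a b \<or> t = large_down a b" by (auto simp: large_tiles_def)
  then show False
  proof
    assume "t = large_up a b"
    then have "(a,b,True) \<in> t" "(a,b,False) \<in> t" by (auto simp: large_up_def)
    with c show False by auto
  next
    assume "t = large_down a b"
    then have "(a+1,b,False) \<in> t" "(a,b+1,False) \<in> t" by (auto simp: large_down_def)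
    with c show False by auto
  qed
qed

lemma small_iff: "t \<in> small_tiles \<longleftrightarrow> (\<exists>c. t = {c})"
  unfolding small_tiles_def by auto

lemma card_tilings_Adm:
  assumes fin: "finite R"
  shows "card (tilings R) = card (Adm R)"
proof -
  define f where "f T = T \<inter> large_tiles" for T :: "cell set set"
  define g where "g L = L \<union> (\<lambda>c. {c}) ` (R - \<Union>L)" for L :: "cell set set"
  have "bij_betw f (tilings R) (Adm R)"
  proof (rule bij_betw_byWitness[where f'=g])
    show "\<forall>T\<in>tilings R. g (f T) = T"
    proof
      fix T assume T: "T \<in> tilings R"
      have "(\<lambda>c. {c}) ` (R - \<Union>(T \<inter> large_tiles)) = T - large_tiles"
      proof (intro equalityI subsetI)
        fix x assume "x \<in> (\<lambda>c. {c}) ` (R - \<Union>(T \<inter> large_tiles))"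
        then obtain c where x: "x = {c}" and c: "c \<in> R" "c \<notin> \<Union>(T \<inter> large_tiles)" by auto
        from T c have "c \<in> \<Union>T" unfolding tilings_def by auto
        then obtain t where t: "t \<in> T" "c \<in> t" by auto
        with c have tl: "t \<notin> large_tiles" by auto
        with T t have "t \<in> small_tiles" unfolding tilings_def by auto
        with t have "t = {c}" by (auto simp: small_iff)
        with t tl x show "x \<in> T - large_tiles" by auto
      next
        fix x assume x: "x \<in> T - large_tiles"
        with T have "x \<in> small_tiles" unfolding tilings_def by auto
        then obtain c where c: "x = {c}" by (auto simp: small_iff)
        have "c \<in> R" using T x c unfolding tilings_def by auto
        moreover have "c \<notin> \<Union>(T \<inter> large_tiles)"
        proof
          assume "c \<in> \<Union>(T \<inter> large_tiles)"
          then obtain t where "t \<in> T" "t \<in> large_tiles" "c \<in> t" by auto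
          moreover have "t \<noteq> x" using x \<open>t \<in> large_tiles\<close> by auto
          moreover have "\<forall>t\<in>T. \<forall>t'\<in>T. t \<noteq> t' \<longrightarrow> t \<inter> t' = {}" using T unfolding tilings_def by simp
          ultimately have "t \<inter> x = {}" using x by blast
          then show False using c \<open>c \<in> t\<close> by auto
        qed
        ultimately show "x \<in> (\<lambda>c. {c}) ` (R - \<Union>(T \<inter> large_tiles))" using c by blast
      qed
      then show "g (f T) = T" unfolding f_def g_def by auto
    qed
  next
    show "\<forall>L\<in>Adm R. f (g L) = L"
    proof
      fix L assume L: "L \<in> Adm R"
      have "(\<lambda>c. {c}) ` (R - \<Union>L) \<inter> large_tiles = {}"
        using large_not_small by (auto simp: small_iff)
      with L show "f (g L) = L" unfolding f_def g_def Adm_def by auto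
    qed
  next
    show "f ` tilings R \<subseteq> Adm R"
    proof
      fix L assume "L \<in> f ` tilings R"
      then obtain T where T: "T \<in> tilings R" and L: "L = T \<inter> large_tiles" unfolding f_def by auto
      have d: "\<forall>t\<in>T. \<forall>t'\<in>T. t \<noteq> t' \<longrightarrow> t \<inter> t' = {}" "\<forall>t\<in>T. t \<subseteq> R"
        using T unfolding tilings_def by simp_all
      show "L \<in> Adm R" unfolding Adm_def L using d by blast
    qed
  next
    show "g ` Adm R \<subseteq> tilings R"
    proof
      fix T assume "T \<in> g ` Adm R"
      then obtain L where L: "L \<in> Adm R" and T: "T = g L" by auto
      have LP: "L \<subseteq> Pow R" using L unfolding Adm_def by auto
      have finL: "finite L" using LP fin by (meson finite_Pow_iff finite_subset)
      have finS: "finite ((\<lambda>c. {c}) ` (R - \<Union>L))"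
        using fin by simp
      show "T \<in> tilings R"
        unfolding tilings_def T g_def
      proof (intro CollectI conjI)
        show "finite (L \<union> (\<lambda>c. {c}) ` (R - \<Union>L))" using finL finS by simp
        show "L \<union> (\<lambda>c. {c}) ` (R - \<Union>L) \<subseteq> small_tiles \<union> large_tiles"
          using L unfolding Adm_def by (auto simp: small_iff)
        show "\<forall>t\<in>L \<union> (\<lambda>c. {c}) ` (R - \<Union>L). t \<subseteq> R" using L unfolding Adm_def by auto
        show "\<forall>t\<in>L \<union> (\<lambda>c. {c}) ` (R - \<Union>L). \<forall>t'\<in>L \<union> (\<lambda>c. {c}) ` (R - \<Union>L). t \<noteq> t' \<longrightarrow> t \<inter> t' = {}"
          using L unfolding Adm_def by blast
        show "\<Union> (L \<union> (\<lambda>c. {c}) ` (R - \<Union>L)) = R" using L unfolding Adm_def by auto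
      qed
    qed
  qed
  then show ?thesis by (simp add: bij_betw_same_card)
qed



definition tile :: "nat \<Rightarrow> cell set" where
  "tile j = (if even j then large_up (int (j div 2)) 0 else large_down (int (j div 2)) 0)"

lemma tile_even: "tile (2*a) = large_up (int a) 0"
  by (simp add: tile_def)
lemma tile_odd: "tile (2*a+1) = large_down (int a) 0"
  by (simp add: tile_def)
lemma tile_odd'[simp]: "tile (Suc (2*a)) = large_down (int a) 0"
  by (simp add: tile_def)
declare tile_even[simp]

lemma par_neq[simp]: "(2*a::nat) \<noteq> Suc (2*b)" "Suc (2*b) \<noteq> 2*a" by presburger+

lemma nat_par: fixes j :: nat obtains a where "j = 2*a" | a where "j = 2*a+1"
  by (metis oddE evenE)

lemma tile_inj: "inj tile"
proof (rule injI)
  fix i j assume e: "tile i = tile j"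
  show "i = j"
  proof (cases i rule: nat_par)
    case (1 a)
    then have "(int a, 0, True) \<in> tile j" "(int a, 0, False) \<in> tile j" using e by (auto simp: tile_even large_up_def)
    then show ?thesis using 1
      by (cases j rule: nat_par) (auto simp: tile_even tile_odd large_up_def large_down_def)
  next
    case (2 a)
    then have "(int a+1, 0, False) \<in> tile j" "(int a, 1, False) \<in> tile j" using e by (auto simp: tile_odd large_down_def)
    then show ?thesis using 2
      by (cases j rule: nat_par) (auto simp: tile_even tile_odd large_up_def large_down_def)
  qed
qed

lemma tile_disj:
  assumes "i < j"
  shows "tile i \<inter> tile j = {} \<longleftrightarrow> \<not> (j = i+2 \<or> (odd i \<and> j = i+1))"
proof (cases i rule: nat_par)
  case (1 a)
  then show ?thesis using assms
    by (cases j rule: nat_par) (auto simp: tile_even tile_odd large_up_def large_down_def)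
next
  case (2 a)
  then show ?thesis using assms
    apply (cases j rule: nat_par)
     apply (auto simp: tile_even tile_odd large_up_def large_down_def)
    done
qed

definition strip :: "cell set" where "strip = {(a,b,u). 0 \<le> a \<and> 0 \<le> b \<and> b < 2}"

lemma large_in_strip:
  assumes "t \<in> large_tiles" "t \<subseteq> strip"
  shows "\<exists>j. t = tile j"
proof -
  obtain a b where "t = large_up a b \<or> t = large_down a b" using assms(1) by (auto simp: large_tiles_def)
  then show ?thesis
  proof
    assume t: "t = large_up a b"
    then have "(a,b,True) \<in> strip" "(a,b+1,True) \<in> strip" using assms(2) by (auto simp: large_up_def)
    then have "a \<ge> 0" "b = 0" by (auto simp: strip_def)
    then have "t = tile (2 * nat a)" using t by (simp add: tile_even)
    then show ?thesis by blast
  next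
    assume t: "t = large_down a b"
    then have "(a,b+1,False) \<in> strip" "(a+1,b,False) \<in> strip" using assms(2) by (auto simp: large_down_def)
    then have "a \<ge> 0" "b = 0" by (auto simp: strip_def)
    then have "t = tile (2 * nat a + 1)" using t by (simp add: tile_odd)
    then show ?thesis by blast
  qed
qed

definition okC :: "nat set \<Rightarrow> bool" where
  "okC C = (\<forall>i\<in>C. \<forall>j\<in>C. i \<noteq> j \<longrightarrow> tile i \<inter> tile j = {})"

lemma tile_large: "tile j \<in> large_tiles"
  by (cases j rule: nat_par) (auto simp: tile_even tile_odd large_tiles_def)

lemma Adm_char:
  assumes "R \<subseteq> strip"
  shows "Adm R = (\<lambda>C. tile ` C) ` {C. C \<subseteq> {j. tile j \<subseteq> R} \<and> okC C}"
proof (intro equalityI subsetI)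
  fix L assume L: "L \<in> Adm R"
  define C where "C = {j. tile j \<in> L}"
  have "L = tile ` C"
  proof (intro equalityI subsetI)
    fix t assume "t \<in> L"
    with L assms have "t \<in> large_tiles" "t \<subseteq> strip" unfolding Adm_def by auto
    then obtain j where "t = tile j" using large_in_strip by blast
    then show "t \<in> tile ` C" using \<open>t \<in> L\<close> C_def by auto
  qed (auto simp: C_def)
  moreover have "C \<subseteq> {j. tile j \<subseteq> R}" using L unfolding Adm_def C_def by auto
  moreover have "okC C"
    unfolding okC_def
  proof (intro ballI impI)
    fix i j assume "i \<in> C" "j \<in> C" "i \<noteq> j"
    then have "tile i \<noteq> tile j" using tile_inj by (auto dest: injD)
    then show "tile i \<inter> tile j = {}" using L \<open>i \<in> C\<close> \<open>j \<in> C\<close> unfolding Adm_def C_def by auto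
  qed
  ultimately show "L \<in> (\<lambda>C. tile ` C) ` {C. C \<subseteq> {j. tile j \<subseteq> R} \<and> okC C}" by blast
next
  fix L assume "L \<in> (\<lambda>C. tile ` C) ` {C. C \<subseteq> {j. tile j \<subseteq> R} \<and> okC C}"
  then obtain C where L: "L = tile ` C" and C: "C \<subseteq> {j. tile j \<subseteq> R}" "okC C" by auto
  have "\<forall>t\<in>L. \<forall>t'\<in>L. t \<noteq> t' \<longrightarrow> t \<inter> t' = {}"
  proof (intro ballI impI)
    fix t t' assume "t \<in> L" "t' \<in> L" "t \<noteq> t'"
    then obtain i j where "i \<in> C" "j \<in> C" "t = tile i" "t' = tile j" "i \<noteq> j" using L by auto
    then show "t \<inter> t' = {}" using C(2) unfolding okC_def by auto
  qed
  then show "L \<in> Adm R" unfolding Adm_def L using C tile_large by auto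
qed

lemma card_Adm:
  assumes "R \<subseteq> strip"
  shows "card (Adm R) = card {C. C \<subseteq> {j. tile j \<subseteq> R} \<and> okC C}"
  unfolding Adm_char[OF assms]
  by (rule card_image) (meson inj_onI inj_image_eq_iff tile_inj)

lemma regionA_strip: "regionA n \<subseteq> strip" by (auto simp: regionA_def strip_def)
lemma regionB_strip: "regionB n \<subseteq> strip" by (auto simp: regionB_def strip_def)

lemma JA: "{j. tile j \<subseteq> regionA n} = {..<2*n-2}"
proof (intro equalityI subsetI)
  fix j assume "j \<in> {j. tile j \<subseteq> regionA n}"
  then show "j \<in> {..<2*n-2}"
    by (cases j rule: nat_par) (auto simp: tile_even tile_odd large_up_def large_down_def regionA_def)
next
  fix j assume "j \<in> {..<2*n-2}"
  then show "j \<in> {j. tile j \<subseteq> regionA n}"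
    by (cases j rule: nat_par) (auto simp: tile_even tile_odd large_up_def large_down_def regionA_def)
qed

lemma JB1:
  assumes "n \<ge> 1"
  shows "tile j \<subseteq> regionB n \<longleftrightarrow> j < 2*n-1 \<and> j+2 \<noteq> 2*n-1"
proof -
  obtain m where n: "n = Suc m" using assms by (cases n) auto
  have e: "2*n-1 = Suc (2*m)" using n by simp
  show ?thesis
  proof (cases j rule: nat_par)
    case (1 a)
    then show ?thesis unfolding e by (auto simp: large_up_def regionB_def n)
  next
    case (2 a)
    then show ?thesis unfolding e by (auto simp: large_down_def regionB_def n)
  qed
qed

lemma JB: "n \<ge> 1 \<Longrightarrow> {j. tile j \<subseteq> regionB n} = {j. j < 2*n-1 \<and> j+2 \<noteq> 2*n-1}"
  using JB1 by auto



definition nb :: "nat \<Rightarrow> nat set" where "nb k = {j. j+2 = k \<or> (odd j \<and> j+1 = k)}"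

lemma okC_insert:
  assumes "C \<subseteq> {..<k}"
  shows "okC (insert k C) \<longleftrightarrow> okC C \<and> C \<inter> nb k = {}"
proof -
  have "okC (insert k C) \<longleftrightarrow> okC C \<and> (\<forall>j\<in>C. tile j \<inter> tile k = {})"
  proof
    assume h: "okC (insert k C)"
    have "okC C" using h unfolding okC_def by blast
    moreover have "\<forall>j\<in>C. tile j \<inter> tile k = {}"
    proof
      fix j assume "j \<in> C"
      then have "j \<noteq> k" using assms by auto
      then show "tile j \<inter> tile k = {}" using h \<open>j \<in> C\<close> unfolding okC_def by blast
    qed
    ultimately show "okC C \<and> (\<forall>j\<in>C. tile j \<inter> tile k = {})" ..
  next
    assume h: "okC C \<and> (\<forall>j\<in>C. tile j \<inter> tile k = {})"
    show "okC (insert k C)" unfolding okC_def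
    proof (intro ballI impI)
      fix i j assume ij: "i \<in> insert k C" "j \<in> insert k C" "i \<noteq> j"
      show "tile i \<inter> tile j = {}"
      proof (cases "i = k")
        case True
        then have "j \<in> C" using ij by auto
        then show ?thesis using h True by (auto simp: Int_commute)
      next
        case False
        then have i: "i \<in> C" using ij by auto
        show ?thesis
        proof (cases "j = k")
          case True then show ?thesis using h i by auto
        next
          case False then show ?thesis using h i ij unfolding okC_def by auto
        qed
      qed
    qed
  qed
  also have "(\<forall>j\<in>C. tile j \<inter> tile k = {}) \<longleftrightarrow> C \<inter> nb k = {}"
  proof -
    have "\<And>j. j \<in> C \<Longrightarrow> tile j \<inter> tile k = {} \<longleftrightarrow> j \<notin> nb k"
      using assms tile_disj unfolding nb_def by auto
    then show ?thesis by auto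
  qed
  finally show ?thesis .
qed

definition Q :: "nat \<Rightarrow> nat set \<Rightarrow> nat" where
  "Q k Z = card {C. C \<subseteq> {..<k} \<and> okC C \<and> C \<inter> Z = {}}"

lemma finite_Qset: "finite {C. C \<subseteq> {..<k::nat} \<and> P C}"
  by (rule finite_subset[of _ "Pow {..<k}"]) auto

lemma Q_Suc: "Q (Suc k) Z = (if k \<in> Z then Q k Z else Q k Z + Q k (Z \<union> nb k))"
proof -
  define S where "S = {C. C \<subseteq> {..<Suc k} \<and> okC C \<and> C \<inter> Z = {}}"
  define S0 where "S0 = {C. C \<subseteq> {..<k} \<and> okC C \<and> C \<inter> Z = {}}"
  define S1 where "S1 = {C. C \<subseteq> {..<k} \<and> okC C \<and> C \<inter> (Z \<union> nb k) = {}}"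
  have sub: "C \<subseteq> {..<Suc k} \<longleftrightarrow> C - {k} \<subseteq> {..<k}" for C by auto
  have S_split: "S = S0 \<union> {C\<in>S. k \<in> C}"
    unfolding S_def S0_def by (auto simp: less_Suc_eq)
  have okC_sub: "okC C \<Longrightarrow> okC (C - {k})" for C unfolding okC_def by auto
  have S1_eq: "{C\<in>S. k \<in> C} = (if k \<in> Z then {} else insert k ` S1)"
  proof (cases "k \<in> Z")
    case True then show ?thesis unfolding S_def by auto
  next
    case False
    have "{C\<in>S. k \<in> C} = insert k ` S1"
    proof (intro equalityI subsetI)
      fix C assume C: "C \<in> {C\<in>S. k \<in> C}"
      define D where "D = C - {k}"
      have D: "D \<subseteq> {..<k}" using C unfolding S_def D_def by (auto simp: less_Suc_eq)
      have CD: "C = insert k D" using C D_def by auto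
      have "okC (insert k D)" using C CD unfolding S_def by auto
      then have "okC D \<and> D \<inter> nb k = {}" using okC_insert[OF D] by simp
      moreover have "D \<inter> Z = {}" using C unfolding S_def D_def by auto
      ultimately have "D \<in> S1" using D unfolding S1_def by auto
      then show "C \<in> insert k ` S1" using CD by auto
    next
      fix C assume "C \<in> insert k ` S1"
      then obtain D where D: "D \<in> S1" "C = insert k D" by auto
      have "okC (insert k D)" using D okC_insert[of D k] unfolding S1_def by auto
      then show "C \<in> {C\<in>S. k \<in> C}" using D False unfolding S_def S1_def by auto
    qed
    then show ?thesis using False by simp
  qed
  have fin0: "finite S0" unfolding S0_def by (rule finite_Qset)
  have fin1: "finite (insert k ` S1)" unfolding S1_def by (rule finite_imageI, rule finite_Qset)
  have disj: "S0 \<inter> insert k ` S1 = {}" unfolding S0_def by auto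
  have inj: "inj_on (insert k) S1"
    unfolding S1_def by (rule inj_onI) (metis Diff_insert_absorb lessThan_iff less_irrefl subsetD mem_Collect_eq)
  have "Q (Suc k) Z = card S" unfolding Q_def S_def ..
  also have "\<dots> = (if k \<in> Z then card S0 else card S0 + card S1)"
  proof (cases "k \<in> Z")
    case True then show ?thesis using S_split S1_eq by simp
  next
    case False
    then have "S = S0 \<union> insert k ` S1" using S_split S1_eq by simp
    then have "card S = card S0 + card (insert k ` S1)"
      using card_Un_disjoint[OF fin0 fin1 disj] by simp
    also have "card (insert k ` S1) = card S1" using card_image[OF inj] .
    finally show ?thesis using False by simp
  qed
  finally show ?thesis unfolding Q_def S0_def S1_def .
qed

lemma Q_rel: "Z \<inter> {..<k} = Z' \<inter> {..<k} \<Longrightarrow> Q k Z = Q k Z'"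
  unfolding Q_def by (rule arg_cong[where f=card]) blast

definition q :: "nat \<Rightarrow> bool \<Rightarrow> bool \<Rightarrow> nat" where
  "q k z1 z2 = Q k {j. (z1 \<and> j+1 = k) \<or> (z2 \<and> j+2 = k)}"

lemma q_0: "q 0 z1 z2 = 1"
proof -
  have "{C. C \<subseteq> {..<0::nat} \<and> okC C \<and> C \<inter> {j. (z1 \<and> j+1 = 0) \<or> (z2 \<and> j+2 = 0)} = {}} = {{}}"
    by (auto simp: okC_def)
  then show ?thesis unfolding q_def Q_def by simp
qed

lemma q_T: "q (Suc k) True z2 = q k z2 False"
  unfolding q_def by (simp add: Q_Suc, rule Q_rel) auto

lemma q_F: "q (Suc k) False z2 = q k z2 False + q k (z2 \<or> even k) True"
proof -
  have "q (Suc k) False z2 = Q k {j. z2 \<and> j+2 = Suc k} + Q k ({j. z2 \<and> j+2 = Suc k} \<union> nb k)"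
    unfolding q_def by (simp add: Q_Suc)
  also have "Q k {j. z2 \<and> j+2 = Suc k} = q k z2 False"
    unfolding q_def by (rule Q_rel) auto
  also have "Q k ({j. z2 \<and> j+2 = Suc k} \<union> nb k) = q k (z2 \<or> even k) True"
    unfolding q_def nb_def by (rule Q_rel) (rule set_eqI, cases z2; simp; presburger)
  finally show ?thesis .
qed

fun P :: "nat \<Rightarrow> int" where
  "P 0 = 0" | "P (Suc 0) = 1" | "P (Suc (Suc n)) = 2 * P (Suc n) + P n"

lemma states:
  "2 * int (q (2*m) False False) = P (m+2) + P (m+1) + (-1)^(m+1) \<and>
   int (q (2*m) True False) = P (m+1) \<and>
   2 * int (q (2*m) True True) = P (m+1) + P m + (-1)^m \<and>
   int (q (2*m) False True) = int (q (2*m) True True) + P m"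
proof (induction m)
  case 0
  then show ?case by (simp add: q_0)
next
  case (Suc m)
  have e: "2 * Suc m = Suc (Suc (2*m))" by simp
  have r1: "P (m+3) = 2 * P (m+2) + P (m+1)" by (simp add: numeral_3_eq_3)
  have r2: "P (m+2) = 2 * P (m+1) + P m" by simp
  have s1: "(-1::int) ^ (Suc m + 1) = (-1) ^ m" "(-1::int) ^ (m+1) + (-1) ^ m = 0" "(-1::int) ^ (Suc m) + (-1) ^ m = 0" by simp_all
  have qq: "q (2 * Suc m) False False = q (2*m) False False + 2 * q (2*m) True True + q (2*m) True False"
    "q (2 * Suc m) True False = q (2*m) False False + q (2*m) True True"
    "q (2 * Suc m) True True = q (2*m) False False"
    "q (2 * Suc m) False True = q (2*m) False False + q (2*m) True False"
    unfolding e by (simp_all add: q_T q_F)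
  show ?case unfolding qq using Suc.IH r1 r2 s1
    by (simp add: algebra_simps numeral_3_eq_3)
qed



lemma finA: "finite (regionA n)"
  by (rule finite_subset[of _ "{0..<int n} \<times> {0..<2} \<times> UNIV"]) (auto simp: regionA_def)

lemma finB: "finite (regionB n)"
  by (rule finite_subset[of _ "{0..int n} \<times> {0..<2} \<times> UNIV"]) (auto simp: regionB_def split: if_splits)

lemma A_q: "A (Suc m) = q (2*m) False False"
proof -
  have "A (Suc m) = card {C. C \<subseteq> {j. tile j \<subseteq> regionA (Suc m)} \<and> okC C}"
    unfolding A_def num_tilings_def card_tilings_Adm[OF finA] card_Adm[OF regionA_strip] ..
  also have "\<dots> = card {C. C \<subseteq> {..<2*m} \<and> okC C}" unfolding JA by simp
  also have "\<dots> = q (2*m) False False" unfolding q_def Q_def by simp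
  finally show ?thesis .
qed

lemma B_q: "B (Suc m) = q (2*m) True False + q (2*m) True True"
proof -
  have "B (Suc m) = card {C. C \<subseteq> {j. tile j \<subseteq> regionB (Suc m)} \<and> okC C}"
    unfolding B_def num_tilings_def card_tilings_Adm[OF finB] card_Adm[OF regionB_strip] ..
  also have "\<dots> = card {C. C \<subseteq> {j. j < Suc (2*m) \<and> j+2 \<noteq> Suc (2*m)} \<and> okC C}"
    using JB[of "Suc m"] by simp
  also have "\<dots> = q (Suc (2*m)) False True" unfolding q_def Q_def
    by (rule arg_cong[where f=card]) auto
  also have "\<dots> = q (2*m) True False + q (2*m) True True" by (simp add: q_F)
  finally show ?thesis .
qed

lemma A_int: "n \<ge> 1 \<Longrightarrow> 2 * int (A n) = P (n+1) + P n + (-1)^n"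
proof -
  assume "n \<ge> 1"
  then obtain m where n: "n = Suc m" by (cases n) auto
  show ?thesis using states[of m] unfolding n A_q by simp
qed

lemma B_int: "n \<ge> 1 \<Longrightarrow> 2 * int (B n) = P (n+1) + P n - (-1)^n"
proof -
  assume "n \<ge> 1"
  then obtain m where n: "n = Suc m" by (cases n) auto
  have "P (m+2) = 2 * P (m+1) + P m" by simp
  then show ?thesis using states[of m] unfolding n B_q by (simp add: algebra_simps)
qed

lemma r2: "(1 + sqrt 2)^2 = 2 * (1 + sqrt 2) + 1" "(1 - sqrt 2)^2 = 2 * (1 - sqrt 2) + 1"
  by (simp_all add: power2_eq_square algebra_simps)

lemma Pc: "real_of_int (P n) * (2 * sqrt 2) = (1 + sqrt 2)^n - (1 - sqrt 2)^n"
proof (induction n rule: P.induct)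
  case 1 then show ?case by simp
next
  case 2 then show ?case by simp
next
  case (3 n)
  have a: "(1 + sqrt 2)^(Suc (Suc n)) = (1 + sqrt 2)^n * (2 * (1 + sqrt 2) + 1)"
    by (metis r2(1) power_add add_2_eq_Suc')
  have b: "(1 - sqrt 2)^(Suc (Suc n)) = (1 - sqrt 2)^n * (2 * (1 - sqrt 2) + 1)"
    by (metis r2(2) power_add add_2_eq_Suc')
  have "real_of_int (P (Suc (Suc n))) * (2 * sqrt 2) = 2 * (real_of_int (P (Suc n)) * (2 * sqrt 2)) + real_of_int (P n) * (2 * sqrt 2)"
    by (simp add: algebra_simps)
  also have "\<dots> = 2 * ((1 + sqrt 2)^(Suc n) - (1 - sqrt 2)^(Suc n)) + ((1 + sqrt 2)^n - (1 - sqrt 2)^n)"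
    using 3 by simp
  also have "\<dots> = (1 + sqrt 2)^(Suc (Suc n)) - (1 - sqrt 2)^(Suc (Suc n))"
    unfolding a b by (simp add: algebra_simps)
  finally show ?case .
qed

lemma H_P: "H (n+1) = real_of_int (P (n+1) + P n)"
proof -
  have s: "sqrt 2 * sqrt 2 = 2" by simp
  have s0: "sqrt 2 \<noteq> 0" by simp
  have s': "sqrt 2 * (sqrt 2 * x) = 2 * x" for x by (simp add: mult.assoc[symmetric])
  have "real_of_int (P (n+1) + P n) * (2 * sqrt 2) = (1 + sqrt 2)^(n+1) - (1 - sqrt 2)^(n+1) + ((1 + sqrt 2)^n - (1 - sqrt 2)^n)"
    using Pc[of "n+1"] Pc[of n] by (simp add: algebra_simps)
  also have "\<dots> = H (n+1) * (2 * sqrt 2)"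
    unfolding H_def by (simp add: algebra_simps s s')
  finally show ?thesis using s0 by simp
qed

theorem theorem3:
  shows "A 1 = 1 \<and> A 2 = 4 \<and> B 1 = 2 \<and> B 2 = 3 \<and>
    (\<forall>n\<ge>1.
      real (A n) = ((1 + sqrt 2) ^ (n+1) + (1 - sqrt 2) ^ (n+1)) / 4 + (-1) ^ n / 2 \<and>
      real (A n) = H (n+1) / 2 + (-1) ^ n / 2 \<and>
      real (B n) = ((1 + sqrt 2) ^ (n+1) + (1 - sqrt 2) ^ (n+1)) / 4 - (-1) ^ n / 2 \<and>
      real (B n) = H (n+1) / 2 - (-1) ^ n / 2)"
proof -
  have P2: "P 2 = 2" and P3: "P 3 = 5" by (simp_all add: numeral_2_eq_2 numeral_3_eq_3)
  have "2 * int (A 1) = 2" using A_int[of 1] by simp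
  then have a1: "A 1 = 1" by simp
  have "2 * int (A 2) = 8" using A_int[of 2] P2 P3 by simp
  then have a2: "A 2 = 4" by simp
  have "2 * int (B 1) = 4" using B_int[of 1] P2 by simp
  then have b1: "B 1 = 2" by simp
  have "2 * int (B 2) = 6" using B_int[of 2] P2 P3 by simp
  then have b2: "B 2 = 3" by simp
  have main: "real (A n) = H (n+1) / 2 + (-1) ^ n / 2 \<and> real (B n) = H (n+1) / 2 - (-1) ^ n / 2" if "n \<ge> 1" for n
  proof -
    have "2 * real (A n) = real_of_int (P (n+1) + P n) + (-1)^n"
      using arg_cong[OF A_int[OF that], of real_of_int] by simp
    moreover have "2 * real (B n) = real_of_int (P (n+1) + P n) - (-1)^n"
      using arg_cong[OF B_int[OF that], of real_of_int] by simp
    ultimately show ?thesis unfolding H_P[symmetric] by simp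
  qed
  have Hf: "H (n+1) / 2 = ((1 + sqrt 2) ^ (n+1) + (1 - sqrt 2) ^ (n+1)) / 4" for n
    unfolding H_def by simp
  show ?thesis using a1 a2 b1 b2 main Hf by simp
qed

end
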